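(* Let $K\in\mathcal{K}$ and let $L\in\mathbb{R}^{q\times n}$ be such that $A_K+DL$ is Hurwitz. Let $P_K^L$ be the solution of $$(A_K+DL)^\top P_K^L+P_K^L(A_K+DL)+Q_K-\gamma^2L^\top L=0.$$ Let $L'=\gamma^{-2}D^\top P_K^L$, $\Psi_K^L=\gamma^{2}(L'-L)^\top(L'-L)$, $L^\star_K=\gamma^{-2}D^\top P_K$, and $c(K)=\mathrm{Tr}\left(\int_0^\infty e^{(A_K+DL^\star_K)t}e^{(A_K+DL^\star_K)^\top t}\,dt\right)$. Then $\mathrm{Tr}(P_K-P_K^L)\le\|\Psi_K^L\|\,c(K)$.
   Context: Let $A\in\mathbb{R}^{n\times n}$, $B\in\mathbb{R}^{n\times m}$, $C\in\mathbb{R}^{p\times n}$, $D\in\mathbb{R}^{n\times q}$, $E\in\mathbb{R}^{p\times m}$, $\gamma>0$, with $Q:=C^\top C\succ 0$, $E^\top C=0$, $R:=E^\top E\succ 0$. For $K\in\mathbb{R}^{m\times n}$ set $A_K=A-BK$, $Q_K=Q+K^\top RK$, $T_{zw}(K)(s)=(C-EK)(sI-A+BK)^{-1}D$, and $\mathcal{K}=\{K:\ A_K\text{ Hurwitz},\ \|T_{zw}(K)\|_{\mathcal{H}_\infty}<\gamma\}$, where $\|G\|_{\mathcal{H}_\infty}=\sup_{\omega\in\mathbb{R}}\bar\sigma(G(j\omega))$. For $K\in\mathcal{K}$, $P_K$ denotes the unique symmetric positive definite solution of $A_K^\top P+PA_K+Q_K+\gamma^{-2}PDD^\top P=0$ for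 which $A_K+\gamma^{-2}DD^\top P_K$ is Hurwitz. $\|\cdot\|$ is the spectral norm, $\mathrm{Tr}$ the trace. *)

theory Defs
  imports "HOL-Analysis.Analysis"
begin

text \<open>Matrices are Cartesian: an r x c real matrix is real^'c^'r.\<close>

definition mpow :: "real^'n^'n \<Rightarrow> nat \<Rightarrow> real^'n^'n" where
  "mpow M k = ((\<lambda>X. X ** M) ^^ k) (mat 1)"

definition mexp :: "real^'n^'n \<Rightarrow> real^'n^'n" where
  "mexp M = (\<Sum>k. (1 / fact k) *\<^sub>R mpow M k)"

definition cmat :: "real^'c^'r \<Rightarrow> complex^'c^'r" where
  "cmat M = map_matrix complex_of_real M"

definition hurwitz :: "real^'n^'n \<Rightarrow> bool" where
  "hurwitz M \<longleftrightarrow> (\<forall>mu::complex. (\<exists>v::complex^'n. v \<noteq> 0 \<and> cmat M *v v = mu *s v) \<longrightarrow> Re mu < 0)"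

text \<open>Spectral norm (largest singular value) = operator norm w.r.t. Euclidean norms.\<close>
definition spec_norm :: "real^'c^'r \<Rightarrow> real" where
  "spec_norm M = onorm (\<lambda>x. M *v x)"

definition cspec_norm :: "complex^'c^'r \<Rightarrow> real" where
  "cspec_norm M = onorm (\<lambda>x. M *v x)"

definition pos_def :: "real^'n^'n \<Rightarrow> bool" where
  "pos_def M \<longleftrightarrow> transpose M = M \<and> (\<forall>x. x \<noteq> 0 \<longrightarrow> x \<bullet> (M *v x) > 0)"

definition Tzw :: "real^'n^'n \<Rightarrow> real^'m^'n \<Rightarrow> real^'n^'p \<Rightarrow> real^'q^'n \<Rightarrow> real^'m^'p
                  \<Rightarrow> real^'n^'m \<Rightarrow> complex \<Rightarrow> complex^'q^'p" where
  "Tzw A B C D E K s = cmat (C - E ** K) ** matrix_inv (mat s - cmat (A - B ** K)) ** cmat D"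

definition Hinf_norm :: "(complex \<Rightarrow> complex^'q^'p) \<Rightarrow> real" where
  "Hinf_norm G = (SUP \<omega>\<in>(UNIV::real set). cspec_norm (G (\<i> * complex_of_real \<omega>)))"

definition Kset :: "real^'n^'n \<Rightarrow> real^'m^'n \<Rightarrow> real^'n^'p \<Rightarrow> real^'q^'n \<Rightarrow> real^'m^'p
                  \<Rightarrow> real \<Rightarrow> (real^'n^'m) set" where
  "Kset A B C D E \<gamma> = {K. hurwitz (A - B ** K) \<and>
      bdd_above (range (\<lambda>\<omega>::real. cspec_norm (Tzw A B C D E K (\<i> * complex_of_real \<omega>)))) \<and>
      Hinf_norm (Tzw A B C D E K) < \<gamma>}"

end

theory Submission
  imports Defs "Jordan_Normal_Form.Spectral_Radius"
begin

hide_const (open) Matrix.mat Matrix.vec Matrix.row Matrix.col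
no_notation Matrix.scalar_prod (infix "\<bullet>" 70)
no_notation Matrix.vec_index (infixl "$" 100)


typedef ('n::finite) sqm = "UNIV :: (real^'n^'n) set" morphisms sq Sq by simp

setup_lifting type_definition_sqm

lemma onorm_mat_nonneg: "0 \<le> onorm (\<lambda>x. (M::real^'n^'m) *v x)"
  by (rule onorm_pos_le[OF matrix_vector_mul_bounded_linear])

lemma matrix_add_rdistrib':
  fixes A B :: "'a::semiring_1^'n^'m" and C :: "'a^'p^'n"
  shows "(A + B) ** C = A ** C + B ** C"
  by (simp add: matrix_matrix_mult_def Finite_Cartesian_Product.vec_eq_iff sum.distrib distrib_right)

lemma mvfun_add: "(\<lambda>x. (A + B) *v x) = (\<lambda>x. A *v x + B *v x)"
  by (rule ext) (simp add: matrix_vector_mult_add_rdistrib)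

lemma mvfun_scale: "(\<lambda>x. (r *\<^sub>R (A::real^'n^'m)) *v x) = (\<lambda>x. r *\<^sub>R (A *v x))"
  by (rule ext) (rule scaleR_matrix_vector_assoc[symmetric])

lemma mvfun_mult: "(\<lambda>x. (A ** B) *v x) = (\<lambda>x. A *v x) \<circ> (\<lambda>x. B *v x)"
  by (rule ext) (simp add: matrix_vector_mul_assoc)

instantiation sqm :: (finite) real_algebra_1
begin
lift_definition zero_sqm :: "'a sqm" is "0" .
lift_definition one_sqm :: "'a sqm" is "mat 1" .
lift_definition plus_sqm :: "'a sqm \<Rightarrow> 'a sqm \<Rightarrow> 'a sqm" is "(+)" .
lift_definition minus_sqm :: "'a sqm \<Rightarrow> 'a sqm \<Rightarrow> 'a sqm" is "(-)" .
lift_definition uminus_sqm :: "'a sqm \<Rightarrow> 'a sqm" is "uminus" .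
lift_definition times_sqm :: "'a sqm \<Rightarrow> 'a sqm \<Rightarrow> 'a sqm" is "(**)" .
lift_definition scaleR_sqm :: "real \<Rightarrow> 'a sqm \<Rightarrow> 'a sqm" is "scaleR" .
instance
proof
  fix a b c :: "'a sqm" and r s :: real
  show "a + b + c = a + (b + c)" by transfer (simp add: add.assoc)
  show "a + b = b + a" by transfer (simp add: add.commute)
  show "0 + a = a" by transfer simp
  show "- a + a = 0" by transfer simp
  show "a - b = a + - b" by transfer simp
  show "r *\<^sub>R (a + b) = r *\<^sub>R a + r *\<^sub>R b" by transfer (simp add: scaleR_add_right)
  show "(r + s) *\<^sub>R a = r *\<^sub>R a + s *\<^sub>R a" by transfer (simp add: scaleR_add_left)
  show "r *\<^sub>R s *\<^sub>R a = (r * s) *\<^sub>R a" by transfer simp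
  show "1 *\<^sub>R a = a" by transfer simp
  show "a * b * c = a * (b * c)" by transfer (simp add: matrix_mul_assoc)
  show "1 * a = a" by transfer (simp add: matrix_mul_lid)
  show "a * 1 = a" by transfer (simp add: matrix_mul_rid)
  show "(a + b) * c = a * c + b * c" by transfer (simp add: matrix_add_rdistrib')
  show "a * (b + c) = a * b + a * c" by transfer (simp add: matrix_add_ldistrib)
  show "(0::'a sqm) \<noteq> 1" apply transfer
    apply (simp add: Finite_Cartesian_Product.vec_eq_iff Finite_Cartesian_Product.mat_def) done
  show "r *\<^sub>R a * b = r *\<^sub>R (a * b)" by transfer (rule scalar_matrix_assoc[symmetric])
  show "a * r *\<^sub>R b = r *\<^sub>R (a * b)" by transfer (simp add: Finite_Cartesian_Product.vec_eq_iff matrix_matrix_mult_def sum_distrib_left mult.left_commute)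
qed
end

instantiation sqm :: (finite) real_normed_algebra_1
begin
lift_definition norm_sqm :: "'a sqm \<Rightarrow> real" is "\<lambda>M. onorm (\<lambda>x. M *v x)" .
definition sgn_sqm :: "'a sqm \<Rightarrow> 'a sqm" where "sgn_sqm x = x /\<^sub>R norm x"
definition dist_sqm :: "'a sqm \<Rightarrow> 'a sqm \<Rightarrow> real" where "dist_sqm x y = norm (x - y)"
definition uniformity_sqm :: "('a sqm \<times> 'a sqm) filter" where
  "uniformity_sqm = (INF e\<in>{0 <..}. principal {(x, y). dist x y < e})"
definition open_sqm :: "'a sqm set \<Rightarrow> bool" where
  "open_sqm U = (\<forall>x\<in>U. \<forall>\<^sub>F (x', y) in uniformity. x' = x \<longrightarrow> y \<in> U)"
instance
proof
  fix a b c :: "'a sqm" and r s :: real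
  show "dist a b = norm (a - b)" by (simp add: dist_sqm_def)
  show "sgn a = a /\<^sub>R norm a" by (simp add: sgn_sqm_def)
  show "(uniformity :: ('a sqm \<times> 'a sqm) filter) = (INF e\<in>{0 <..}. principal {(x, y). dist x y < e})"
    by (simp add: uniformity_sqm_def)
  fix U :: "'a sqm set"
  show "open U = (\<forall>x\<in>U. \<forall>\<^sub>F (x', y) in uniformity. x' = x \<longrightarrow> y \<in> U)"
    by (simp add: open_sqm_def)
  show "norm a = 0 \<longleftrightarrow> a = 0" apply transfer
    apply (simp only: onorm_eq_0[OF matrix_vector_mul_bounded_linear])
    apply (subst matrix_eq) by simp
  show "norm (a + b) \<le> norm a + norm b" apply transfer
    unfolding mvfun_add by (rule onorm_triangle[OF matrix_vector_mul_bounded_linear matrix_vector_mul_bounded_linear])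
  show "norm (r *\<^sub>R a) = \<bar>r\<bar> * norm a" apply transfer
    unfolding mvfun_scale by (rule onorm_scaleR[OF matrix_vector_mul_bounded_linear])
  show "norm (a * b) \<le> norm a * norm b" apply transfer
    unfolding mvfun_mult by (rule onorm_compose[OF matrix_vector_mul_bounded_linear matrix_vector_mul_bounded_linear])
  have "(\<lambda>x. mat 1 *v x) = (\<lambda>x::real^'a. x)" by (rule ext) (simp add: matrix_vector_mul_lid)
  then show "norm (1::'a sqm) = 1" apply transfer by (simp only: onorm_id)
qed
end


lemma norm_mat_le_sum: "norm (M::real^'n^'m) \<le> (\<Sum>i\<in>UNIV. \<Sum>j\<in>UNIV. \<bar>M $ i $ j\<bar>)"
proof -
  have "norm M \<le> (\<Sum>i\<in>UNIV. \<bar>norm (M $ i)\<bar>)"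
    unfolding norm_vec_def by (simp add: L2_set_le_sum)
  also have "\<dots> \<le> (\<Sum>i\<in>UNIV. \<Sum>j\<in>UNIV. \<bar>M $ i $ j\<bar>)"
    by (intro sum_mono) (simp add: norm_le_l1_cart)
  finally show ?thesis .
qed

lemma sum_entries_le: "(\<Sum>i\<in>UNIV. \<Sum>j\<in>UNIV. \<bar>(M::real^'n^'m) $ i $ j\<bar>) \<le> real CARD('m) * real CARD('n) * norm M"
proof -
  have "(\<Sum>i\<in>UNIV. \<Sum>j\<in>UNIV. \<bar>M $ i $ j\<bar>) \<le> (\<Sum>i\<in>(UNIV::'m set). \<Sum>j\<in>(UNIV::'n set). norm M)"
    apply (intro sum_mono)
    subgoal for i j using component_le_norm_cart[of "M$i" j] Finite_Cartesian_Product.norm_nth_le[of M i] by linarith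
    done
  then show ?thesis by simp
qed

lemma norm_sq_le: "norm (sq x) \<le> real CARD('n) * real CARD('n) * norm (x::'n::finite sqm)"
proof -
  have "norm (sq x) \<le> (\<Sum>i\<in>UNIV. \<Sum>j\<in>UNIV. \<bar>sq x $ i $ j\<bar>)" by (rule norm_mat_le_sum)
  also have "\<dots> \<le> (\<Sum>i\<in>(UNIV::'n set). \<Sum>j\<in>(UNIV::'n set). norm x)"
    by (intro sum_mono) (simp add: norm_sqm.rep_eq matrix_component_le_onorm)
  finally show ?thesis by simp
qed

lemma norm_le_sq: "norm (x::'n::finite sqm) \<le> real CARD('n) * real CARD('n) * norm (sq x)"
proof -
  have "norm x \<le> (\<Sum>i\<in>UNIV. \<Sum>j\<in>UNIV. \<bar>sq x $ i $ j\<bar>)"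
    by (simp add: norm_sqm.rep_eq onorm_le_matrix_component_sum)
  also have "\<dots> \<le> real CARD('n) * real CARD('n) * norm (sq x)" by (rule sum_entries_le)
  finally show ?thesis .
qed

lemma sq_add: "sq (x + y) = sq x + sq y" by transfer simp
lemma sq_diff: "sq (x - y) = sq x - sq y" by transfer simp
lemma sq_scaleR: "sq (r *\<^sub>R x) = r *\<^sub>R sq x" by transfer simp
lemma sq_mult: "sq (x * y) = sq x ** sq y" by transfer simp
lemma sq_one: "sq 1 = mat 1" by transfer simp
lemma sq_zero: "sq 0 = 0" by transfer simp

lemma bounded_linear_sq: "bounded_linear (sq :: 'n::finite sqm \<Rightarrow> _)"
  apply (rule bounded_linear_intro[where K="real CARD('n) * real CARD('n)"])
   apply (auto simp: sq_add sq_scaleR)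
  subgoal for x using norm_sq_le[of x] by (metis mult.commute)
  done

instance sqm :: (finite) banach
proof
  fix X :: "nat \<Rightarrow> 'a sqm"
  assume X: "Cauchy X"
  let ?c = "real CARD('a) * real CARD('a)"
  have "Cauchy (\<lambda>k. sq (X k))"
  proof (rule metric_CauchyI)
    fix e :: real assume e: "0 < e"
    have "0 < ?c + 1" by (simp add: add_nonneg_pos)
    with e have "0 < e / (?c + 1)" by simp
    from metric_CauchyD[OF X this] obtain M where M: "\<forall>m\<ge>M. \<forall>n\<ge>M. dist (X m) (X n) < e / (?c + 1)" by blast
    show "\<exists>M. \<forall>m\<ge>M. \<forall>n\<ge>M. dist (sq (X m)) (sq (X n)) < e"
    proof (intro exI allI impI)
      fix m n assume "M \<le> m" "M \<le> n"
      with M have d: "norm (X m - X n) < e / (?c + 1)" by (simp add: dist_norm)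
      have "dist (sq (X m)) (sq (X n)) = norm (sq (X m - X n))" by (simp add: dist_norm sq_diff)
      also have "\<dots> \<le> ?c * norm (X m - X n)" by (rule norm_sq_le)
      also have "\<dots> \<le> (?c + 1) * norm (X m - X n)" by (simp add: mult_right_mono)
      also have "\<dots> < (?c + 1) * (e / (?c + 1))" using d \<open>0 < ?c + 1\<close> by (intro mult_strict_left_mono) auto
      also have "\<dots> = e" using \<open>0 < ?c + 1\<close> by simp
      finally show "dist (sq (X m)) (sq (X n)) < e" .
    qed
  qed
  then obtain M where M: "(\<lambda>k. sq (X k)) \<longlonglongrightarrow> M" using Cauchy_convergent_iff convergent_def by blast
  have "(\<lambda>k. sq (X k) - M) \<longlonglongrightarrow> 0" using M by (rule LIM_zero)
  then have "(\<lambda>k. ?c * norm (sq (X k) - M)) \<longlonglongrightarrow> 0"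
    by (intro tendsto_mult_right_zero tendsto_norm_zero)
  then have "(\<lambda>k. X k - Sq M) \<longlonglongrightarrow> 0"
  proof (rule Lim_null_comparison[rotated])
    show "\<forall>\<^sub>F k in sequentially. norm (X k - Sq M) \<le> ?c * norm (sq (X k) - M)"
      using norm_le_sq[of "X k - Sq M" for k] by (simp add: sq_diff Sq_inverse)
  qed
  then have "X \<longlonglongrightarrow> Sq M" by (rule LIM_zero_cancel)
  then show "convergent X" by (auto simp: convergent_def)
qed

lemma mpow_Suc: "mpow M (Suc k) = mpow M k ** M"
  by (simp add: mpow_def)
lemma mpow_0: "mpow M 0 = mat 1"
  by (simp add: mpow_def)
lemma mpow_commute: "M ** mpow M k = mpow M k ** M"
  by (induction k) (simp_all add: mpow_0 mpow_Suc matrix_mul_assoc)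

lemma sq_power: "sq (x ^ k) = mpow (sq x) k"
  by (induction k) (simp_all add: mpow_0 mpow_Suc sq_one sq_mult mpow_commute)

lemma mexp_sq: "mexp M = sq (exp (Sq M))"
proof -
  have "sq (exp (Sq M)) = (\<Sum>n. sq ((Sq M) ^ n /\<^sub>R fact n))"
    unfolding exp_def by (rule bounded_linear.suminf[OF bounded_linear_sq summable_exp_generic])
  also have "\<dots> = mexp M"
    unfolding mexp_def by (simp add: sq_scaleR sq_power Sq_inverse inverse_eq_divide)
  finally show ?thesis by simp
qed

lemma mexp_summable: "summable (\<lambda>k. (1 / fact k) *\<^sub>R mpow (M::real^'n::finite^'n) k)"
  using bounded_linear.summable[OF bounded_linear_sq summable_exp_generic[of "Sq M"]]
  by (simp add: sq_scaleR sq_power Sq_inverse inverse_eq_divide)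

lemma mexp_zero: "mexp (0::real^'n::finite^'n) = mat 1"
  by (simp add: mexp_sq sq_one flip: zero_sqm_def)

lemma mexp_has_derivative:
  "((\<lambda>t. mexp (t *\<^sub>R M)) has_vector_derivative (M ** mexp (t *\<^sub>R M))) (at t within S)"
proof -
  have eq: "mexp (t *\<^sub>R M) = sq (exp (t *\<^sub>R Sq M))" for t
    by (simp add: mexp_sq scaleR_sqm_def Sq_inverse)
  have "((\<lambda>t. sq (exp (t *\<^sub>R Sq M))) has_vector_derivative sq (Sq M * exp (t *\<^sub>R Sq M))) (at t)"
    by (rule bounded_linear.has_vector_derivative[OF bounded_linear_sq exp_scaleR_has_vector_derivative_left])
  then show ?thesis
    by (auto simp: eq sq_mult Sq_inverse intro: has_vector_derivative_at_within)
qed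

lemma mexp_commute: "M ** mexp (t *\<^sub>R M) = mexp (t *\<^sub>R M) ** M"
proof -
  have "Sq M * exp (t *\<^sub>R Sq M) = exp (t *\<^sub>R Sq M) * Sq M"
    by (simp add: exp_times_scaleR_commute)
  then have "sq (Sq M * exp (t *\<^sub>R Sq M)) = sq (exp (t *\<^sub>R Sq M) * Sq M)" by simp
  then show ?thesis by (simp add: sq_mult Sq_inverse mexp_sq scaleR_sqm_def)
qed

lemma linear_transpose: "linear (transpose :: real^'n^'m \<Rightarrow> real^'m^'n)"
  by (rule linearI) (simp_all add: transpose_def Finite_Cartesian_Product.vec_eq_iff)

lemma transpose_scaleR: "transpose (c *\<^sub>R (M::real^'n^'m)) = c *\<^sub>R transpose M"
  by (simp add: transpose_def Finite_Cartesian_Product.vec_eq_iff)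

lemma transpose_mpow: "transpose (mpow M k) = mpow (transpose M) k"
  by (induction k) (simp_all add: mpow_0 mpow_Suc matrix_transpose_mul transpose_mat mpow_commute)

lemma mexp_transpose: "mexp (transpose M) = transpose (mexp (M::real^'n::finite^'n))"
proof -
  have "transpose (mexp M) = (\<Sum>k. transpose ((1 / fact k) *\<^sub>R mpow M k))"
    unfolding mexp_def
    by (rule bounded_linear.suminf[OF linear_transpose[unfolded linear_conv_bounded_linear] mexp_summable])
  also have "\<dots> = mexp (transpose M)"
    unfolding mexp_def by (simp add: transpose_scaleR transpose_mpow)
  finally show ?thesis by simp
qed



lemma bounded_linear_mv_left: "bounded_linear (\<lambda>M::real^'n^'m. M *v x)"
  unfolding linear_conv_bounded_linear[symmetric]
  by (rule linearI) (simp_all add: matrix_vector_mult_add_rdistrib scaleR_matrix_vector_assoc)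

lemma traj_deriv:
  "((\<lambda>t. mexp (t *\<^sub>R A) *v x) has_vector_derivative (A *v (mexp (t *\<^sub>R A) *v x))) (at t within S)"
  using bounded_linear.has_vector_derivative[OF bounded_linear_mv_left[of x] mexp_has_derivative[of A t S]]
  by (simp add: matrix_vector_mul_assoc)

lemma traj_deriv2:
  "((\<lambda>t. Z *v (mexp (t *\<^sub>R A) *v x)) has_vector_derivative (Z *v (A *v (mexp (t *\<^sub>R A) *v x)))) (at t within S)"
  by (rule bounded_linear.has_vector_derivative[OF matrix_vector_mul_bounded_linear traj_deriv])

lemma quad_deriv:
  "((\<lambda>t. (mexp (t *\<^sub>R A) *v x) \<bullet> (Z *v (mexp (t *\<^sub>R A) *v w))) has_real_derivative
     ((A *v (mexp (t *\<^sub>R A) *v x)) \<bullet> (Z *v (mexp (t *\<^sub>R A) *v w))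
      + (mexp (t *\<^sub>R A) *v x) \<bullet> (Z *v (A *v (mexp (t *\<^sub>R A) *v w))))) (at t within S)"
  unfolding has_real_derivative_iff_has_vector_derivative
  using bounded_bilinear.has_vector_derivative[OF bounded_bilinear_inner traj_deriv[of A x t S] traj_deriv2[of Z A w t S]]
  by (simp add: add.commute)

lemma quad_upper: "x \<bullet> ((X::real^'n^'n) *v x) \<le> onorm (\<lambda>v. X *v v) * (x \<bullet> x)"
proof -
  have "x \<bullet> (X *v x) \<le> norm x * norm (X *v x)" by (rule norm_cauchy_schwarz)
  also have "\<dots> \<le> norm x * (onorm (\<lambda>v. X *v v) * norm x)"
    using onorm[OF matrix_vector_mul_bounded_linear, of X x] by (intro mult_left_mono) auto
  also have "\<dots> = onorm (\<lambda>v. X *v v) * (x \<bullet> x)"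
    by (simp add: power2_norm_eq_inner[symmetric] power2_eq_square)
  finally show ?thesis .
qed

lemma lyap_decay:
  fixes A X :: "real^'n^'n"
  assumes lo: "\<And>x. x \<bullet> x \<le> x \<bullet> (X *v x)"
    and neg: "\<And>x. (A *v x) \<bullet> (X *v x) + x \<bullet> (X *v (A *v x)) \<le> - \<delta> * (x \<bullet> x)"
    and dpos: "\<delta> > 0"
  shows "\<exists>C \<epsilon>. 0 < \<epsilon> \<and> (\<forall>x t. 0 \<le> t \<longrightarrow> norm (mexp (t *\<^sub>R A) *v x) ^ 2 \<le> C * norm x ^ 2 * exp (- \<epsilon> * t))"
proof -
  define C where "C = onorm (\<lambda>v. X *v v) + 1"
  have Cpos: "C > 0" unfolding C_def using onorm_mat_nonneg[of X] by linarith
  have up: "x \<bullet> (X *v x) \<le> C * (x \<bullet> x)" for x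
  proof -
    have "x \<bullet> (X *v x) \<le> onorm (\<lambda>v. X *v v) * (x \<bullet> x)" by (rule quad_upper)
    also have "\<dots> \<le> C * (x \<bullet> x)" unfolding C_def by (intro mult_right_mono) auto
    finally show ?thesis .
  qed
  define \<epsilon> where "\<epsilon> = \<delta> / C"
  have epos: "\<epsilon> > 0" unfolding \<epsilon>_def using dpos Cpos by simp
  have main: "norm (mexp (t *\<^sub>R A) *v x) ^ 2 \<le> C * norm x ^ 2 * exp (- \<epsilon> * t)" if t: "0 \<le> t" for x t
  proof -
    define y where "y = (\<lambda>s. mexp (s *\<^sub>R A) *v x)"
    define V where "V = (\<lambda>s. y s \<bullet> (X *v y s))"
    define h where "h = (\<lambda>s. V s * exp (\<epsilon> * s))"
    have "h t \<le> h 0"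
    proof (rule DERIV_nonpos_imp_nonincreasing[OF t])
      fix s assume "0 \<le> s" "s \<le> t"
      let ?V' = "(A *v y s) \<bullet> (X *v y s) + y s \<bullet> (X *v (A *v y s))"
      have dV: "(V has_real_derivative ?V') (at s)"
        unfolding V_def y_def by (rule quad_deriv[where S=UNIV])
      have de: "((\<lambda>s. exp (\<epsilon> * s)) has_real_derivative exp (\<epsilon> * s) * \<epsilon>) (at s)"
        by (auto intro!: derivative_eq_intros)
      have dh0: "(h has_real_derivative (?V' * exp (\<epsilon> * s) + exp (\<epsilon> * s) * \<epsilon> * V s)) (at s)"
        unfolding h_def by (rule DERIV_mult[OF dV de])
      have dh: "(h has_real_derivative (?V' * exp (\<epsilon> * s) + V s * (exp (\<epsilon> * s) * \<epsilon>))) (at s)"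
        using dh0 by (simp add: algebra_simps)
      have "?V' \<le> - \<delta> * (y s \<bullet> y s)" by (rule neg)
      moreover have "\<epsilon> * V s \<le> \<delta> * (y s \<bullet> y s)"
      proof -
        have "\<epsilon> * V s \<le> \<epsilon> * (C * (y s \<bullet> y s))" unfolding V_def
          using up epos by (intro mult_left_mono) auto
        also have "\<dots> = \<delta> * (y s \<bullet> y s)" unfolding \<epsilon>_def using Cpos by simp
        finally show ?thesis .
      qed
      ultimately have "?V' + \<epsilon> * V s \<le> 0" by linarith
      then have "(?V' + \<epsilon> * V s) * exp (\<epsilon> * s) \<le> 0" by (simp add: mult_nonpos_nonneg)
      then have "?V' * exp (\<epsilon> * s) + V s * (exp (\<epsilon> * s) * \<epsilon>) \<le> 0" by (simp add: algebra_simps)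
      with dh show "\<exists>y. (h has_real_derivative y) (at s) \<and> y \<le> 0" by blast
    qed
    moreover have "h 0 = x \<bullet> (X *v x)" unfolding h_def V_def y_def by (simp add: mexp_zero)
    moreover have "x \<bullet> (X *v x) \<le> C * norm x ^ 2" using up[of x] by (simp add: power2_norm_eq_inner)
    ultimately have "V t * exp (\<epsilon> * t) \<le> C * norm x ^ 2" unfolding h_def by linarith
    then have "V t \<le> C * norm x ^ 2 * exp (- \<epsilon> * t)"
      by (simp add: exp_minus field_simps)
    moreover have "norm (y t) ^ 2 \<le> V t" unfolding V_def using lo by (simp add: power2_norm_eq_inner)
    ultimately show ?thesis unfolding y_def by linarith
  qed
  show ?thesis using epos main by blast
qed





lemma spectral_decay:
  fixes B :: "real^'n^'n"
  assumes ev: "\<And>\<mu> v. v \<noteq> 0 \<Longrightarrow> cmat B *v v = \<mu> *s v \<Longrightarrow> cmod \<mu> < 1"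
  shows "\<exists>c r. 0 < r \<and> r < 1 \<and> (\<forall>k i j. \<bar>mpow B k $ i $ j\<bar> \<le> c * r ^ k)"
proof -
  define n where "n = CARD('n)"
  have npos: "n > 0" unfolding n_def by simp
  obtain h where h: "bij_betw h {0..<n} (UNIV::'n set)"
    using ex_bij_betw_nat_finite[of "UNIV::'n set"] unfolding n_def by auto
  define g where "g = inv_into {0..<n} h"
  have g_lt: "g k < n" for k
    unfolding g_def using h inv_into_into[of k h "{0..<n}"] by (auto simp: bij_betw_def)
  have hg: "h (g k) = k" for k
    unfolding g_def using h by (meson bij_betw_inv_into_right UNIV_I)
  have gh: "i < n \<Longrightarrow> g (h i) = i" for i
    unfolding g_def using h by (simp add: bij_betw_inv_into_left)
  have h_inj: "i < n \<Longrightarrow> j < n \<Longrightarrow> h i = h j \<longleftrightarrow> i = j" for i j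
    using gh by metis
  have reidx: "(\<Sum>l\<in>{0..<n}. f (h l)) = (\<Sum>m\<in>UNIV. f m)" for f :: "'n \<Rightarrow> 'b::comm_monoid_add"
    by (rule sum.reindex_bij_betw[OF h])
  define Bc :: "complex mat" where "Bc = Matrix.mat n n (\<lambda>(i,j). complex_of_real (B $ h i $ h j))"
  have Bc: "Bc \<in> carrier_mat n n" unfolding Bc_def by simp
  have Bc_dim: "dim_row Bc = n" "dim_col Bc = n" unfolding Bc_def by simp_all
  have Bc_idx: "i < n \<Longrightarrow> j < n \<Longrightarrow> Bc $$ (i,j) = complex_of_real (B $ h i $ h j)" for i j
    unfolding Bc_def by simp
  have spec: "cmod \<mu> < 1" if "eigenvalue Bc \<mu>" for \<mu>
  proof -
    from that obtain v where v: "v \<in> carrier_vec n" "v \<noteq> 0\<^sub>v n" "Bc *\<^sub>v v = \<mu> \<cdot>\<^sub>v v"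
      unfolding eigenvalue_def eigenvector_def using Bc by auto
    define w :: "complex^'n" where "w = (\<chi> k. vec_index v (g k))"
    have "w \<noteq> 0"
    proof
      assume w0: "w = 0"
      have "v = 0\<^sub>v n"
      proof (rule eq_vecI)
        fix i assume "i < dim_vec (0\<^sub>v n :: complex Matrix.vec)"
        then have i: "i < n" by simp
        have "vec_index v i = w $ h i" unfolding w_def using gh[OF i] by simp
        then show "vec_index v i = vec_index (0\<^sub>v n) i" using w0 i by simp
      qed (use v in simp)
      with v show False by simp
    qed
    moreover have "cmat B *v w = \<mu> *s w"
    proof -
      have "(cmat B *v w) $ k = \<mu> * w $ k" for k
      proof -
        have "(cmat B *v w) $ k = (\<Sum>m\<in>UNIV. complex_of_real (B $ k $ m) * vec_index v (g m))"
          by (simp add: matrix_vector_mult_def cmat_def map_matrix_def w_def)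
        also have "\<dots> = (\<Sum>l\<in>{0..<n}. complex_of_real (B $ k $ h l) * vec_index v (g (h l)))"
          by (rule reidx[symmetric])
        also have "\<dots> = (\<Sum>l\<in>{0..<n}. Bc $$ (g k, l) * vec_index v l)"
          by (intro sum.cong refl) (simp add: gh Bc_idx g_lt hg)
        also have "\<dots> = vec_index (Bc *\<^sub>v v) (g k)"
          using Bc v(1) g_lt[of k] by (simp add: scalar_prod_def Matrix.row_def)
        also have "\<dots> = \<mu> * w $ k" using v g_lt[of k] by (simp add: w_def)
        finally show ?thesis .
      qed
      then show ?thesis by (simp add: Finite_Cartesian_Product.vec_eq_iff)
    qed
    ultimately show ?thesis using ev by blast
  qed
  define \<rho> where "\<rho> = spectral_radius Bc"
  have fin: "finite (spectrum Bc)" using card_finite_spectrum(1)[OF Bc] .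
  have ne: "spectrum Bc \<noteq> {}" using spectrum_non_empty[OF Bc npos] .
  have rho_lt: "\<rho> < 1"
    unfolding \<rho>_def spectral_radius_def using fin ne spec
    by (subst Max_less_iff) (auto simp: spectrum_def)
  have rho_ge: "0 \<le> \<rho>"
  proof -
    from ne obtain \<mu> where "\<mu> \<in> spectrum Bc" by auto
    then have "cmod \<mu> \<le> \<rho>" unfolding \<rho>_def spectral_radius_def using fin by (intro Max_ge) auto
    then show ?thesis by (meson norm_ge_zero order_trans)
  qed
  define r where "r = (1 + \<rho>) / 2"
  have rpos: "0 < r" and rlt: "r < 1" and rho_r: "\<rho> < r" using rho_lt rho_ge unfolding r_def by auto
  define Bc' where "Bc' = complex_of_real (1 / r) \<cdot>\<^sub>m Bc"
  have Bc': "Bc' \<in> carrier_mat n n" unfolding Bc'_def using Bc by simp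
  have "spectral_radius Bc' < 1"
  proof -
    have "cmod \<mu> < 1" if "\<mu> \<in> spectrum Bc'" for \<mu>
    proof -
      from that obtain v where v: "v \<in> carrier_vec n" "v \<noteq> 0\<^sub>v n" "Bc' *\<^sub>v v = \<mu> \<cdot>\<^sub>v v"
        unfolding spectrum_def eigenvalue_def eigenvector_def using Bc' by auto
      have "Bc *\<^sub>v v = (complex_of_real r * \<mu>) \<cdot>\<^sub>v v"
      proof -
        have "Bc' *\<^sub>v v = complex_of_real (1 / r) \<cdot>\<^sub>v (Bc *\<^sub>v v)"
          unfolding Bc'_def using Bc v(1)
          by (intro eq_vecI) (auto simp: scalar_prod_def Matrix.row_def sum_distrib_left mult.assoc)
        then have "complex_of_real r \<cdot>\<^sub>v (Bc' *\<^sub>v v) = Bc *\<^sub>v v"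
          using rpos by (simp add: smult_smult_assoc)
        with v show ?thesis by (simp add: smult_smult_assoc)
      qed
      then have "eigenvalue Bc (complex_of_real r * \<mu>)"
        unfolding eigenvalue_def eigenvector_def using v Bc by auto
      then have "cmod (complex_of_real r * \<mu>) \<le> \<rho>"
        unfolding \<rho>_def spectral_radius_def using fin by (intro Max_ge) (auto simp: spectrum_def)
      then have "r * cmod \<mu> \<le> \<rho>" using rpos by (simp add: norm_mult)
      then have "r * cmod \<mu> < r * 1" using rho_r by simp
      then show ?thesis using rpos by (simp only: mult_less_cancel_left_pos)
    qed
    moreover have "finite (spectrum Bc')" using card_finite_spectrum(1)[OF Bc'] .
    moreover have "spectrum Bc' \<noteq> {}" using spectrum_non_empty[OF Bc' npos] .
    ultimately show ?thesis unfolding spectral_radius_def by (subst Max_less_iff) auto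
  qed
  from spectral_radius_jnf_norm_bound_less_1_upper_triangular[OF Bc' this]
  obtain c where c: "\<And>k. norm_bound (Bc' ^\<^sub>m k) c" by auto
  have pw: "\<forall>i j. i < n \<longrightarrow> j < n \<longrightarrow> (Bc' ^\<^sub>m k) $$ (i,j) = complex_of_real ((1 / r) ^ k * mpow B k $ h i $ h j)" for k
  proof (induction k)
    case 0
    show ?case using Bc' by (auto simp: mpow_def Finite_Cartesian_Product.mat_def h_inj)
  next
    case (Suc k)
    show ?case
    proof (intro allI impI)
      fix i j assume i: "i < n" and j: "j < n"
      have "(Bc' ^\<^sub>m Suc k) $$ (i,j) = (\<Sum>l\<in>{0..<n}. (Bc' ^\<^sub>m k) $$ (i,l) * Bc' $$ (l,j))"
        using Bc' i j by (simp add: scalar_prod_def Matrix.row_def Matrix.col_def)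
      also have "\<dots> = (\<Sum>l\<in>{0..<n}. complex_of_real ((1 / r) ^ Suc k * (mpow B k $ h i $ h l * B $ h l $ h j)))"
        using Suc i j by (intro sum.cong refl) (simp add: Bc'_def Bc_idx Bc_dim field_simps)
      also have "\<dots> = complex_of_real (\<Sum>l\<in>{0..<n}. (1 / r) ^ Suc k * (mpow B k $ h i $ h l * B $ h l $ h j))"
        by (simp only: of_real_sum)
      also have "\<dots> = complex_of_real ((1 / r) ^ Suc k * (\<Sum>l\<in>{0..<n}. mpow B k $ h i $ h l * B $ h l $ h j))"
        by (simp only: sum_distrib_left)
      also have "\<dots> = complex_of_real ((1 / r) ^ Suc k * (\<Sum>m\<in>UNIV. mpow B k $ h i $ m * B $ m $ h j))"
        using reidx[of "\<lambda>m. mpow B k $ h i $ m * B $ m $ h j"] by simp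
      also have "\<dots> = complex_of_real ((1 / r) ^ Suc k * mpow B (Suc k) $ h i $ h j)"
        by (simp add: mpow_Suc matrix_matrix_mult_def)
      finally show "(Bc' ^\<^sub>m Suc k) $$ (i,j) = complex_of_real ((1 / r) ^ Suc k * mpow B (Suc k) $ h i $ h j)" .
    qed
  qed
  have "\<bar>mpow B k $ i $ j\<bar> \<le> c * r ^ k" for k i j
  proof -
    have "norm ((Bc' ^\<^sub>m k) $$ (g i, g j)) \<le> c" using c[of k] Bc' g_lt unfolding norm_bound_def by simp
    moreover have "norm ((Bc' ^\<^sub>m k) $$ (g i, g j)) = (1 / r) ^ k * \<bar>mpow B k $ i $ j\<bar>"
      using pw[of k] g_lt hg rpos by (simp add: norm_mult abs_mult norm_power norm_divide)
    ultimately have "(1 / r) ^ k * \<bar>mpow B k $ i $ j\<bar> \<le> c" by simp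
    then have "r ^ k * ((1 / r) ^ k * \<bar>mpow B k $ i $ j\<bar>) \<le> r ^ k * c" using rpos by (intro mult_left_mono) auto
    then show ?thesis using rpos by (simp add: power_one_over field_simps)
  qed
  with rpos rlt show ?thesis by blast
qed




lemma cmat_mult: "cmat (X ** Y) = cmat X ** cmat Y"
  by (simp add: cmat_def map_matrix_def matrix_matrix_mult_def Finite_Cartesian_Product.vec_eq_iff of_real_sum)
lemma cmat_add: "cmat (X + Y) = cmat X + cmat Y"
  by (simp add: cmat_def map_matrix_def Finite_Cartesian_Product.vec_eq_iff)
lemma cmat_diff: "cmat (X - Y) = cmat X - cmat Y"
  by (simp add: cmat_def map_matrix_def Finite_Cartesian_Product.vec_eq_iff)
lemma cmat_one: "cmat (mat 1) = mat 1"
  by (simp add: cmat_def map_matrix_def Finite_Cartesian_Product.vec_eq_iff Finite_Cartesian_Product.mat_def)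
lemma cmat_mv: "cmat M *v (\<chi> i. complex_of_real (x $ i)) = (\<chi> i. complex_of_real ((M *v x) $ i))"
  by (simp add: cmat_def map_matrix_def matrix_vector_mult_def Finite_Cartesian_Product.vec_eq_iff of_real_sum)

lemma mv_smult: "(M::'a::comm_ring_1^'n^'m) *v (c *s v) = c *s (M *v v)"
  by (simp add: matrix_vector_mult_def Finite_Cartesian_Product.vec_eq_iff sum_distrib_left mult.left_commute)

lemma mv_sum: "(\<Sum>k\<in>S. f k) *v (y::real^'n) = (\<Sum>k\<in>S. f k *v y)"
  using linear_sum[OF bounded_linear_mv_left[of y, unfolded linear_conv_bounded_linear[symmetric]]] by simp

lemma inner_tmm: "x \<bullet> ((transpose M ** M) *v y) = (M *v x) \<bullet> (M *v (y::real^'n))"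
proof -
  have "x \<bullet> ((transpose M ** M) *v y) = x \<bullet> ((M *v y) v* M)"
    by (simp add: matrix_vector_mul_assoc[symmetric] transpose_matrix_vector)
  also have "\<dots> = ((M *v y) v* M) \<bullet> x" by (rule inner_commute)
  also have "\<dots> = (M *v y) \<bullet> (M *v x)" by (rule dot_lmul_matrix)
  also have "\<dots> = (M *v x) \<bullet> (M *v y)" by (rule inner_commute)
  finally show ?thesis .
qed

lemma hurwitz_lyap:
  fixes A :: "real^'n^'n"
  assumes hw: "hurwitz A"
  shows "\<exists>X \<delta>. \<delta> > 0 \<and> (\<forall>x. x \<bullet> x \<le> x \<bullet> (X *v x)) \<and>
           (\<forall>x. (A *v x) \<bullet> (X *v x) + x \<bullet> (X *v (A *v x)) \<le> - \<delta> * (x \<bullet> x))"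
proof -
  define N where "N = mat 1 - A"
  have ker: "\<forall>x. N *v x = 0 \<longrightarrow> x = 0"
  proof (intro allI impI)
    fix x assume Nx: "N *v x = 0"
    show "x = 0"
    proof (rule ccontr)
      assume x0: "x \<noteq> 0"
      define v where "v = (\<chi> i. complex_of_real (x $ i))"
      have "A *v x = x" using Nx unfolding N_def by (simp add: matrix_vector_mult_diff_rdistrib)
      then have "cmat A *v v = 1 *s v" unfolding v_def by (simp add: cmat_mv)
      moreover have "v \<noteq> 0" using x0 unfolding v_def by (simp add: Finite_Cartesian_Product.vec_eq_iff)
      ultimately have "Re 1 < 0" using hw unfolding hurwitz_def by blast
      then show False by simp
    qed
  qed
  then obtain Ni where NiN: "Ni ** N = mat 1" using matrix_left_invertible_ker by blast
  then have NNi: "N ** Ni = mat 1" by (rule matrix_left_right_inverse1)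
  define B where "B = Ni ** (mat 1 + A)"
  have comm: "(mat 1 + A) ** N = N ** (mat 1 + A)"
  proof -
    have "(1 + Sq A) * (1 - Sq A) = (1 - Sq A) * (1 + Sq A)" by (simp add: algebra_simps)
    then have "sq ((1 + Sq A) * (1 - Sq A)) = sq ((1 - Sq A) * (1 + Sq A))" by simp
    then show ?thesis unfolding N_def by (simp add: sq_mult sq_add sq_diff sq_one Sq_inverse)
  qed
  have spec: "cmod \<mu> < 1" if v0: "v \<noteq> 0" and ev: "cmat B *v v = \<mu> *s v" for v \<mu>
  proof -
    let ?a = "cmat A *v v"
    have NB: "N ** B = mat 1 + A" unfolding B_def by (simp add: matrix_mul_assoc NNi)
    have e1: "cmat N *v (cmat B *v v) = v + ?a"
      by (simp only: matrix_vector_mul_assoc cmat_mult[symmetric] NB cmat_add cmat_one matrix_vector_mult_add_rdistrib matrix_vector_mul_lid)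
    have e2: "cmat N *v (cmat B *v v) = \<mu> *s (v - ?a)"
      by (simp only: ev mv_smult N_def cmat_diff cmat_one matrix_vector_mult_diff_rdistrib matrix_vector_mul_lid)
    have eq: "\<mu> * v $ i - \<mu> * ?a $ i = v $ i + ?a $ i" for i
    proof -
      have "(\<mu> *s (v - ?a)) $ i = (v + ?a) $ i" using e1 e2 by simp
      then show ?thesis by (simp add: right_diff_distrib)
    qed
    have mu1: "\<mu> \<noteq> -1"
    proof
      assume "\<mu> = -1"
      then have "2 * v $ i = 0" for i using eq[of i] by (simp add: algebra_simps)
      then have "v $ i = 0" for i by simp
      with v0 show False by (simp add: Finite_Cartesian_Product.vec_eq_iff)
    qed
    have nz: "\<mu> + 1 \<noteq> 0"
    proof
      assume "\<mu> + 1 = 0"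
      then have "\<mu> = -1" by (simp add: eq_neg_iff_add_eq_0)
      with mu1 show False by simp
    qed
    define lam where "lam = (\<mu> - 1) / (\<mu> + 1)"
    have "?a $ i = lam * v $ i" for i
    proof -
      have "(\<mu> + 1) * ?a $ i = (\<mu> - 1) * v $ i" using eq[of i] by (simp add: algebra_simps)
      then show ?thesis unfolding lam_def using nz by (simp add: field_simps)
    qed
    then have "cmat A *v v = lam *s v" by (simp add: Finite_Cartesian_Product.vec_eq_iff)
    then have "Re lam < 0" using hw v0 unfolding hurwitz_def by blast
    then have "((Re \<mu> - 1) * (Re \<mu> + 1) + Im \<mu> * Im \<mu>) / ((Re \<mu> + 1)\<^sup>2 + (Im \<mu>)\<^sup>2) < 0"
      unfolding lam_def by (simp add: Re_divide)
    moreover have "(Re \<mu> + 1)\<^sup>2 + (Im \<mu>)\<^sup>2 > 0"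
    proof -
      have "Re \<mu> + 1 \<noteq> 0 \<or> Im \<mu> \<noteq> 0" using mu1 by (auto simp: complex_eq_iff)
      then show ?thesis by (simp add: sum_power2_gt_zero_iff)
    qed
    ultimately have "(Re \<mu> - 1) * (Re \<mu> + 1) + Im \<mu> * Im \<mu> < 0"
      by (simp add: divide_less_0_iff)
    then have "(Re \<mu>)\<^sup>2 + (Im \<mu>)\<^sup>2 < 1" by (simp add: power2_eq_square algebra_simps)
    then have "(cmod \<mu>)\<^sup>2 < 1" by (simp only: cmod_power2)
    show ?thesis
    proof (rule ccontr)
      assume "\<not> cmod \<mu> < 1"
      then have "1 \<le> cmod \<mu>" by simp
      then have "1 \<le> (cmod \<mu>)\<^sup>2" by (simp add: one_le_power)
      with \<open>(cmod \<mu>)\<^sup>2 < 1\<close> show False by linarith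
    qed
  qed
  obtain c r where r: "0 < r" "r < 1" and cr: "\<And>k i j. \<bar>mpow B k $ i $ j\<bar> \<le> c * r ^ k"
    using spectral_decay[of B] spec by blast
  have "0 \<le> c * r ^ 0" using cr[of 0 undefined undefined] by (rule order_trans[OF abs_ge_zero])
  then have c0: "0 \<le> c" by simp
  define cc where "cc = real CARD('n) * real CARD('n) * c"
  have cc0: "0 \<le> cc" unfolding cc_def using c0 by simp
  obtain K0 where K0: "r ^ K0 < 1 / (2 * (cc + 1))"
    using real_arch_pow_inv[of "1 / (2 * (cc + 1))" r] r cc0 by auto
  define K where "K = Suc K0"
  have rK: "r ^ K \<le> r ^ K0" unfolding K_def using r by (simp add: power_decreasing)
  have PK: "norm (mpow B K *v y) \<le> 1/2 * norm y" for y
  proof -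
    have "onorm (\<lambda>y. mpow B K *v y) \<le> real CARD('n) * real CARD('n) * (c * r ^ K)"
      by (rule onorm_le_matrix_component) (rule cr)
    also have "\<dots> = cc * r ^ K" unfolding cc_def by simp
    also have "\<dots> \<le> (cc + 1) * r ^ K" using r by (simp add: mult_right_mono)
    also have "\<dots> \<le> (cc + 1) * (1 / (2 * (cc + 1)))"
      using rK K0 cc0 by (intro mult_left_mono) auto
    also have "\<dots> = 1/2" using cc0 by simp
    finally have "onorm (\<lambda>y. mpow B K *v y) \<le> 1/2" .
    then show ?thesis using onorm[OF matrix_vector_mul_bounded_linear, of "mpow B K" y]
      by (meson mult_right_mono norm_ge_zero order_trans)
  qed
  define X where "X = (\<Sum>k<K. transpose (mpow B k) ** mpow B k)"
  have q: "x \<bullet> (X *v y) = (\<Sum>k<K. (mpow B k *v x) \<bullet> (mpow B k *v y))" for x y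
    unfolding X_def by (simp add: mv_sum inner_sum_right inner_tmm)
  have lo: "x \<bullet> x \<le> x \<bullet> (X *v x)" for x
  proof -
    have "x \<bullet> (X *v x) = (mpow B 0 *v x) \<bullet> (mpow B 0 *v x) + (\<Sum>k<K0. (mpow B (Suc k) *v x) \<bullet> (mpow B (Suc k) *v x))"
      unfolding q K_def by (rule sum.lessThan_Suc_shift)
    moreover have "0 \<le> (\<Sum>k<K0. (mpow B (Suc k) *v x) \<bullet> (mpow B (Suc k) *v x))"
      by (intro sum_nonneg) simp
    ultimately show ?thesis by (simp add: mpow_0)
  qed
  define \<delta> where "\<delta> = 3 / (8 * (onorm (\<lambda>y. Ni *v y) + 1)\<^sup>2)"
  have dpos: "\<delta> > 0" unfolding \<delta>_def using onorm_mat_nonneg[of Ni] by (simp add: add_nonneg_pos)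
  have neg: "(A *v x) \<bullet> (X *v x) + x \<bullet> (X *v (A *v x)) \<le> - \<delta> * (x \<bullet> x)" for x
  proof -
    define u where "u = N *v x"
    have Bu: "B *v u = x + A *v x"
    proof -
      have "B *v u = (Ni ** ((mat 1 + A) ** N)) *v x" unfolding B_def u_def by (simp add: matrix_vector_mul_assoc matrix_mul_assoc)
      also have "\<dots> = (mat 1 + A) *v x" by (simp add: comm matrix_mul_assoc NiN)
      finally show ?thesis by (simp add: matrix_vector_mult_add_rdistrib)
    qed
    have u: "u = x - A *v x" unfolding u_def N_def by (simp add: matrix_vector_mult_diff_rdistrib)
    have tel: "(B *v u) \<bullet> (X *v (B *v u)) - u \<bullet> (X *v u) = (mpow B K *v u) \<bullet> (mpow B K *v u) - u \<bullet> u"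
    proof -
      have "(B *v u) \<bullet> (X *v (B *v u)) - u \<bullet> (X *v u) =
          (\<Sum>k<K. (mpow B (Suc k) *v u) \<bullet> (mpow B (Suc k) *v u) - (mpow B k *v u) \<bullet> (mpow B k *v u))"
        unfolding q by (simp add: sum_subtractf matrix_vector_mul_assoc mpow_Suc)
      also have "\<dots> = (mpow B K *v u) \<bullet> (mpow B K *v u) - u \<bullet> u"
        by (subst sum_lessThan_telescope) (simp add: mpow_0)
      finally show ?thesis .
    qed
    have expand: "(B *v u) \<bullet> (X *v (B *v u)) - u \<bullet> (X *v u) = 2 * ((A *v x) \<bullet> (X *v x) + x \<bullet> (X *v (A *v x)))"
    proof -
      have e0: "(x + A *v x) \<bullet> (X *v (x + A *v x)) - (x - A *v x) \<bullet> (X *v (x - A *v x)) = 2 * ((A *v x) \<bullet> (X *v x) + x \<bullet> (X *v (A *v x)))"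
        by (simp add: matrix_vector_right_distrib matrix_vector_mult_diff_distrib inner_add_left inner_add_right inner_diff_left inner_diff_right)
      show ?thesis unfolding Bu unfolding u by (rule e0)
    qed
    have "(mpow B K *v u) \<bullet> (mpow B K *v u) \<le> 1/4 * (u \<bullet> u)"
    proof -
      have "(mpow B K *v u) \<bullet> (mpow B K *v u) = norm (mpow B K *v u) ^ 2" by (simp add: power2_norm_eq_inner)
      also have "\<dots> \<le> (1/2 * norm u) ^ 2" by (rule power_mono[OF PK[of u] norm_ge_zero])
      also have "\<dots> = 1/4 * (norm u ^ 2)" by (simp add: power_mult_distrib power2_eq_square)
      also have "\<dots> = 1/4 * (u \<bullet> u)" by (simp add: power2_norm_eq_inner)
      finally show ?thesis .
    qed
    then have k0: "2 * ((A *v x) \<bullet> (X *v x) + x \<bullet> (X *v (A *v x))) \<le> 1/4 * (u \<bullet> u) - u \<bullet> u"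
      using tel expand by simp
    have k1: "(A *v x) \<bullet> (X *v x) + x \<bullet> (X *v (A *v x)) \<le> - 3/8 * (u \<bullet> u)"
      using k0 by simp
    have "x = Ni *v u" unfolding u_def by (simp add: matrix_vector_mul_assoc NiN)
    then have "norm x \<le> onorm (\<lambda>y. Ni *v y) * norm u" using onorm[OF matrix_vector_mul_bounded_linear, of Ni u] by simp
    also have "\<dots> \<le> (onorm (\<lambda>y. Ni *v y) + 1) * norm u" by (simp add: mult_right_mono)
    finally have "norm x ^ 2 \<le> ((onorm (\<lambda>y. Ni *v y) + 1) * norm u) ^ 2" by (intro power_mono) auto
    then have "x \<bullet> x \<le> (onorm (\<lambda>y. Ni *v y) + 1)\<^sup>2 * (u \<bullet> u)" by (simp add: power2_norm_eq_inner[symmetric] power_mult_distrib)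
    then have "\<delta> * (x \<bullet> x) \<le> \<delta> * ((onorm (\<lambda>y. Ni *v y) + 1)\<^sup>2 * (u \<bullet> u))" using dpos by (intro mult_left_mono) auto
    also have "\<dots> = 3/8 * (u \<bullet> u)" unfolding \<delta>_def using onorm_mat_nonneg[of Ni] by (simp add: field_simps add_nonneg_pos)
    finally show ?thesis using k1 by linarith
  qed
  show ?thesis using dpos lo neg by blast
qed





lemma exp_neg_tendsto: "\<epsilon> > 0 \<Longrightarrow> ((\<lambda>t::real. exp (- \<epsilon> * t)) \<longlongrightarrow> 0) at_top"
proof -
  assume e: "\<epsilon> > 0"
  have "filterlim (\<lambda>t::real. - \<epsilon> * t) at_bot at_top"
    by (rule filterlim_tendsto_neg_mult_at_bot[OF tendsto_const _ filterlim_ident]) (use e in simp)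
  then show ?thesis by (rule filterlim_compose[OF exp_at_bot])
qed

lemma hurwitz_decay:
  assumes "hurwitz (A::real^'n^'n)"
  shows "\<exists>C \<epsilon>. 0 < \<epsilon> \<and> (\<forall>x t. 0 \<le> t \<longrightarrow> norm (mexp (t *\<^sub>R A) *v x) ^ 2 \<le> C * norm x ^ 2 * exp (- \<epsilon> * t))"
proof -
  from hurwitz_lyap[OF assms] obtain X \<delta> where "\<delta> > 0" "\<forall>x. x \<bullet> x \<le> x \<bullet> (X *v x)"
    "\<forall>x. (A *v x) \<bullet> (X *v x) + x \<bullet> (X *v (A *v x)) \<le> - \<delta> * (x \<bullet> x)" by blast
  then show ?thesis using lyap_decay[of X A \<delta>] by blast
qed

lemma hurwitz_tendsto:
  assumes "hurwitz (A::real^'n^'n)"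
  shows "((\<lambda>t. mexp (t *\<^sub>R A) *v x) \<longlongrightarrow> 0) at_top"
proof -
  from hurwitz_decay[OF assms] obtain C \<epsilon> where e: "0 < \<epsilon>"
    and b: "\<And>x t. 0 \<le> t \<Longrightarrow> norm (mexp (t *\<^sub>R A) *v x) ^ 2 \<le> C * norm x ^ 2 * exp (- \<epsilon> * t)" by blast
  have "((\<lambda>t. sqrt (C * norm x ^ 2 * exp (- \<epsilon> * t))) \<longlongrightarrow> sqrt (C * norm x ^ 2 * 0)) at_top"
    by (intro tendsto_intros exp_neg_tendsto e)
  then have lim: "((\<lambda>t. sqrt (C * norm x ^ 2 * exp (- \<epsilon> * t))) \<longlongrightarrow> 0) at_top" by simp
  have ev: "\<forall>\<^sub>F t in at_top. norm (mexp (t *\<^sub>R A) *v x) \<le> sqrt (C * norm x ^ 2 * exp (- \<epsilon> * t))"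
    using eventually_ge_at_top[of "0::real"]
  proof eventually_elim
    case (elim t)
    then show ?case using b[OF elim] real_le_rsqrt by blast
  qed
  show ?thesis by (rule Lim_null_comparison[OF ev lim])
qed

lemma mexp_continuous: "continuous_on S (\<lambda>t. mexp (t *\<^sub>R A))"
  by (rule continuous_at_imp_continuous_on) (auto intro: has_vector_derivative_continuous[OF mexp_has_derivative[where S=UNIV]])

lemma inner_mv_transpose: "x \<bullet> (transpose M *v y) = (M *v x) \<bullet> (y::real^'m)"
proof -
  have "x \<bullet> (transpose M *v y) = x \<bullet> (y v* M)" by (simp add: transpose_matrix_vector)
  also have "\<dots> = (y v* M) \<bullet> x" by (rule inner_commute)
  also have "\<dots> = y \<bullet> (M *v x)" by (rule dot_lmul_matrix)
  also have "\<dots> = (M *v x) \<bullet> y" by (rule inner_commute)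
  finally show ?thesis .
qed

lemma inner_mv_sym: "transpose M = M \<Longrightarrow> x \<bullet> (M *v y) = (M *v x) \<bullet> (y::real^'n)"
  using inner_mv_transpose[of x M y] by simp

lemma zero_from_lyap:
  fixes A Z :: "real^'n^'n"
  assumes hw: "hurwitz A" and ly: "\<And>x w. (A *v x) \<bullet> (Z *v w) + x \<bullet> (Z *v (A *v w)) = 0"
  shows "Z = 0"
proof -
  have xw: "x \<bullet> (Z *v w) = 0" for x w
  proof -
    define \<phi> where "\<phi> = (\<lambda>t. (mexp (t *\<^sub>R A) *v x) \<bullet> (Z *v (mexp (t *\<^sub>R A) *v w)))"
    have d: "(\<phi> has_real_derivative 0) (at t)" for t
      using quad_deriv[of A x Z w t UNIV] ly unfolding \<phi>_def by simp
    have const: "\<phi> t = \<phi> 0" for t by (rule DERIV_isconst_all[OF allI[OF d]])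
    have lim: "(\<phi> \<longlongrightarrow> 0) at_top"
    proof -
      have l1: "((\<lambda>t. norm (mexp (t *\<^sub>R A) *v x) * (onorm (\<lambda>v. Z *v v) * norm (mexp (t *\<^sub>R A) *v w))) \<longlongrightarrow> 0 * (onorm (\<lambda>v. Z *v v) * 0)) at_top"
        by (intro tendsto_intros tendsto_norm_zero hurwitz_tendsto[OF hw])
      have "norm (\<phi> t) \<le> norm (mexp (t *\<^sub>R A) *v x) * (onorm (\<lambda>v. Z *v v) * norm (mexp (t *\<^sub>R A) *v w))" for t
      proof -
        have "norm (\<phi> t) \<le> norm (mexp (t *\<^sub>R A) *v x) * norm (Z *v (mexp (t *\<^sub>R A) *v w))"
          unfolding \<phi>_def by (simp add: Cauchy_Schwarz_ineq2)
        also have "\<dots> \<le> norm (mexp (t *\<^sub>R A) *v x) * (onorm (\<lambda>v. Z *v v) * norm (mexp (t *\<^sub>R A) *v w))"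
          by (intro mult_left_mono onorm[OF matrix_vector_mul_bounded_linear]) simp
        finally show ?thesis .
      qed
      moreover have l2: "((\<lambda>t. norm (mexp (t *\<^sub>R A) *v x) * (onorm (\<lambda>v. Z *v v) * norm (mexp (t *\<^sub>R A) *v w))) \<longlongrightarrow> 0) at_top"
        using l1 by simp
      ultimately show ?thesis by (intro Lim_null_comparison[OF _ l2] always_eventually) auto
    qed
    have eqf: "\<phi> = (\<lambda>t. \<phi> 0)" by (rule ext) (rule const)
    have "((\<lambda>t::real. \<phi> 0) \<longlongrightarrow> 0) at_top" using lim by (subst (asm) eqf) assumption
    then have "\<phi> 0 = 0" by (simp add: tendsto_const_iff)
    then show ?thesis unfolding \<phi>_def by (simp add: mexp_zero)
  qed
  show ?thesis
  proof (subst matrix_eq, intro allI)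
    fix w
    have "(Z *v w) \<bullet> (Z *v w) = 0" by (rule xw)
    then show "Z *v w = 0 *v w" by simp
  qed
qed




lemma bl_trace: "bounded_linear (trace :: real^'n^'n \<Rightarrow> real)"
  unfolding linear_conv_bounded_linear[symmetric]
  by (rule linearI) (simp_all add: trace_def sum.distrib sum_distrib_left)

lemma mm_scaleR_right: "(A::real^'n^'m) ** (c *\<^sub>R B) = c *\<^sub>R (A ** (B::real^'p^'n))"
  by (simp add: Finite_Cartesian_Product.vec_eq_iff matrix_matrix_mult_def sum_distrib_left mult.left_commute)

lemma mm_scaleR_left: "(c *\<^sub>R (A::real^'n^'m)) ** (B::real^'p^'n) = c *\<^sub>R (A ** B)"
  by (simp add: scalar_matrix_assoc)

lemma bl_mm: "bounded_bilinear ((**) :: real^'n^'m \<Rightarrow> real^'p^'n \<Rightarrow> real^'p^'m)"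
  unfolding bilinear_conv_bounded_bilinear[symmetric] bilinear_def
  by (auto intro!: linearI simp: matrix_add_ldistrib matrix_add_rdistrib' mm_scaleR_right mm_scaleR_left)

lemma col_entry: "((M::real^'n^'m) *v axis k 1) $ i = M $ i $ k"
  by (simp add: matrix_vector_mult_basis column_def)

lemma transpose_add: "transpose ((X::real^'n^'m) + Y) = transpose X + transpose Y"
  by (simp add: transpose_def Finite_Cartesian_Product.vec_eq_iff)

lemma inner_vmul: "x \<bullet> (y v* M) = (M *v x) \<bullet> (y::real^'m)"
  using inner_mv_transpose[of x M y] by (simp add: transpose_matrix_vector)

lemma inner_mv_transpose2: "x \<bullet> (M *v y) = (transpose M *v x) \<bullet> (y::real^'n)"
  using inner_mv_transpose[of x "transpose M" y] by simp

theorem lemma7: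
  fixes A :: "real^'n^'n" and B :: "real^'m^'n" and C :: "real^'n^'p" and D :: "real^'q^'n"
    and E :: "real^'m^'p" and \<gamma> :: real and K :: "real^'n^'m" and L :: "real^'n^'q"
    and PK PKL :: "real^'n^'n"
  defines "AK \<equiv> A - B ** K"
    and "QK \<equiv> transpose C ** C + transpose K ** (transpose E ** E) ** K"
  assumes gamma_pos: "\<gamma> > 0"
    and Q_pd: "pos_def (transpose C ** C)"
    and EC: "transpose E ** C = 0"
    and R_pd: "pos_def (transpose E ** E)"
    and K_in: "K \<in> Kset A B C D E \<gamma>"
    and PK_pd: "pos_def PK"
    and PK_are: "transpose AK ** PK + PK ** AK + QK + (\<gamma> powi (-2)) *\<^sub>R (PK ** D ** transpose D ** PK) = 0"
    and PK_stab: "hurwitz (AK + (\<gamma> powi (-2)) *\<^sub>R (D ** transpose D ** PK))"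
    and L_stab: "hurwitz (AK + D ** L)"
    and PKL_eq: "transpose (AK + D ** L) ** PKL + PKL ** (AK + D ** L) + QK - (\<gamma>\<^sup>2) *\<^sub>R (transpose L ** L) = 0"
  shows "let L' = (\<gamma> powi (-2)) *\<^sub>R (transpose D ** PKL);
             \<Psi> = (\<gamma>\<^sup>2) *\<^sub>R (transpose (L' - L) ** (L' - L));
             Lstar = (\<gamma> powi (-2)) *\<^sub>R (transpose D ** PK);
             Acl = AK + D ** Lstar;
             c = trace (integral {0..} (\<lambda>t::real. mexp (t *\<^sub>R Acl) ** mexp (t *\<^sub>R transpose Acl)))
         in trace (PK - PKL) \<le> spec_norm \<Psi> * c"
proof -
  define g2 where "g2 = \<gamma>\<^sup>2"
  define s where "s = \<gamma> powi (-2)"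
  have sg: "s * g2 = 1" unfolding s_def g2_def using gamma_pos by (simp add: power_int_minus field_simps)
  have spos: "s > 0" unfolding s_def using gamma_pos by simp
  have g2pos: "g2 > 0" unfolding g2_def using gamma_pos by simp
  define Lstar where "Lstar = s *\<^sub>R (transpose D ** PK)"
  define L' where "L' = s *\<^sub>R (transpose D ** PKL)"
  define \<Psi> where "\<Psi> = g2 *\<^sub>R (transpose (L' - L) ** (L' - L))"
  define Acl where "Acl = AK + D ** Lstar"
  define Abar where "Abar = AK + D ** L"
  define \<Delta> where "\<Delta> = PK - PKL"
  have PKsym: "transpose PK = PK" using PK_pd unfolding pos_def_def by blast
  have QKsym: "transpose QK = QK" unfolding QK_def
    by (simp add: transpose_add matrix_transpose_mul matrix_mul_assoc)
  have are1: "transpose AK ** PK + PK ** AK + QK + s *\<^sub>R (PK ** D ** transpose D ** PK) = 0"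
    using PK_are unfolding s_def .
  have are2: "transpose Abar ** PKL + PKL ** Abar + QK - g2 *\<^sub>R (transpose L ** L) = 0"
    using PKL_eq unfolding Abar_def g2_def .
  note simps0 = matrix_vector_mult_add_rdistrib matrix_vector_mult_diff_rdistrib inner_add_right inner_diff_right
      scaleR_matrix_vector_assoc[symmetric] inner_scaleR_right matrix_vector_mul_assoc[symmetric] inner_mv_transpose inner_vmul
  have e2: "x \<bullet> ((transpose Abar ** PKL + PKL ** Abar + QK - g2 *\<^sub>R (transpose L ** L)) *v w) = 0" for x w
    using are2 by simp
  have QKx: "x \<bullet> (QK *v w) = w \<bullet> (QK *v x)" for x w
    using inner_mv_transpose[of x QK w] QKsym by (simp add: inner_commute)
  have PKLsym: "transpose PKL = PKL"
  proof -
    define Z where "Z = PKL - transpose PKL"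
    have "(Abar *v x) \<bullet> (Z *v w) + x \<bullet> (Z *v (Abar *v w)) = 0" for x w
    proof -
      have a: "x \<bullet> ((transpose Abar ** PKL + PKL ** Abar + QK - g2 *\<^sub>R (transpose L ** L)) *v w)
          = (Abar *v x) \<bullet> (PKL *v w) + x \<bullet> (PKL *v (Abar *v w)) + x \<bullet> (QK *v w) - g2 * ((L *v x) \<bullet> (L *v w))"
        by (simp add: simps0)
      have b: "w \<bullet> ((transpose Abar ** PKL + PKL ** Abar + QK - g2 *\<^sub>R (transpose L ** L)) *v x)
          = (Abar *v w) \<bullet> (PKL *v x) + w \<bullet> (PKL *v (Abar *v x)) + w \<bullet> (QK *v x) - g2 * ((L *v w) \<bullet> (L *v x))"
        by (simp add: simps0)
      have c: "(Abar *v x) \<bullet> (Z *v w) + x \<bullet> (Z *v (Abar *v w)) =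
          (Abar *v x) \<bullet> (PKL *v w) - (PKL *v (Abar *v x)) \<bullet> w + x \<bullet> (PKL *v (Abar *v w)) - (PKL *v x) \<bullet> (Abar *v w)"
        unfolding Z_def by (simp add: matrix_vector_mult_diff_rdistrib inner_diff_right inner_mv_transpose inner_vmul)
      show ?thesis using a b c e2[of x w] e2[of w x] QKx[of x w]
        by (simp add: inner_commute)
    qed
    then have "Z = 0" by (intro zero_from_lyap[OF L_stab[folded Abar_def]])
    then show ?thesis unfolding Z_def by simp
  qed
  have \<Delta>sym: "transpose \<Delta> = \<Delta>" unfolding \<Delta>_def
  proof -
    have "transpose (PK - PKL) = transpose PK - transpose PKL"
      by (simp add: transpose_def Finite_Cartesian_Product.vec_eq_iff)
    then show "transpose (PK - PKL) = PK - PKL" using PKsym PKLsym by simp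
  qed
  have Acl_eq: "Acl = AK + (\<gamma> powi (-2)) *\<^sub>R (D ** transpose D ** PK)"
    unfolding Acl_def Lstar_def s_def by (simp add: matrix_scalar_ac matrix_mul_assoc scalar_matrix_assoc)
  have Acl_hw: "hurwitz Acl" using PK_stab unfolding Acl_eq .
  have psi_bound: "y \<bullet> (\<Psi> *v y) \<le> spec_norm \<Psi> * (y \<bullet> y)" for y
    unfolding spec_norm_def by (rule quad_upper)
  have lyap: "- (y \<bullet> (\<Psi> *v y)) \<le> (Acl *v y) \<bullet> (\<Delta> *v y) + y \<bullet> (\<Delta> *v (Acl *v y))" for y
  proof -
    define u where "u = AK *v y"
    define p where "p = PK *v y"
    define r where "r = PKL *v y"
    define z where "z = transpose D *v p"
    define w where "w = transpose D *v r"
    define \<beta> where "\<beta> = L *v y"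
    define Q where "Q = y \<bullet> (QK *v y)"
    have e1: "y \<bullet> ((transpose AK ** PK + PK ** AK + QK + s *\<^sub>R (PK ** D ** transpose D ** PK)) *v y) = 0"
      using are1 by simp
    have t2: "y \<bullet> (PK *v (AK *v y)) = u \<bullet> p" unfolding u_def p_def
      using inner_mv_sym[OF PKsym, of y "AK *v y"] by (simp add: inner_commute)
    have t3: "y \<bullet> (PK *v (D *v (transpose D *v (PK *v y)))) = z \<bullet> z"
      unfolding z_def p_def using inner_mv_sym[OF PKsym] inner_mv_transpose2 by metis
    have H1: "2 * (u \<bullet> p) + Q + s * (z \<bullet> z) = 0"
      using e1 t2 t3 unfolding u_def p_def Q_def by (simp add: simps0)
    have t4: "y \<bullet> (PKL *v (Abar *v y)) = (Abar *v y) \<bullet> r" unfolding r_def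
      using inner_mv_sym[OF PKLsym, of y "Abar *v y"] by (simp add: inner_commute)
    have t5: "(Abar *v y) \<bullet> r = u \<bullet> r + \<beta> \<bullet> w"
      unfolding Abar_def u_def \<beta>_def w_def
      by (simp add: matrix_vector_mult_add_rdistrib inner_add_left matrix_vector_mul_assoc[symmetric] inner_mv_transpose2 inner_vmul)
    have H2: "2 * (u \<bullet> r + \<beta> \<bullet> w) + Q - g2 * (\<beta> \<bullet> \<beta>) = 0"
    proof -
      have "y \<bullet> ((transpose Abar ** PKL + PKL ** Abar + QK - g2 *\<^sub>R (transpose L ** L)) *v y)
          = (Abar *v y) \<bullet> r + y \<bullet> (PKL *v (Abar *v y)) + Q - g2 * (\<beta> \<bullet> \<beta>)"
        unfolding r_def Q_def \<beta>_def by (simp add: simps0)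
      then show ?thesis using e2[of y y] t4 t5 by simp
    qed
    have t6: "(Acl *v y) \<bullet> (\<Delta> *v y) + y \<bullet> (\<Delta> *v (Acl *v y)) = 2 * (u \<bullet> p - u \<bullet> r + s * (z \<bullet> z) - s * (z \<bullet> w))"
    proof -
      have A1: "y \<bullet> (\<Delta> *v (Acl *v y)) = (Acl *v y) \<bullet> (\<Delta> *v y)"
        using inner_mv_sym[OF \<Delta>sym, of y "Acl *v y"] by (simp add: inner_commute)
      have Aeq: "Acl *v y = u + s *\<^sub>R (D *v z)"
        unfolding Acl_def Lstar_def u_def z_def p_def
        by (simp add: matrix_vector_mult_add_rdistrib matrix_vector_mul_assoc[symmetric] scaleR_matrix_vector_assoc[symmetric] matrix_vector_mult_scaleR)
      have Deq: "\<Delta> *v y = p - r" unfolding \<Delta>_def p_def r_def by (simp add: matrix_vector_mult_diff_rdistrib)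
      have f1: "(D *v z) \<bullet> p = z \<bullet> z" using inner_mv_transpose[of z D p] unfolding z_def[symmetric] by simp
      have f2: "(D *v z) \<bullet> r = z \<bullet> w" using inner_mv_transpose[of z D r] unfolding w_def[symmetric] by simp
      have "(Acl *v y) \<bullet> (\<Delta> *v y) = (u + s *\<^sub>R (D *v z)) \<bullet> (p - r)" by (simp only: Aeq Deq)
      also have "\<dots> = u \<bullet> p - u \<bullet> r + s * ((D *v z) \<bullet> p) - s * ((D *v z) \<bullet> r)"
        by (simp add: inner_add_left inner_diff_right algebra_simps)
      also have "\<dots> = u \<bullet> p - u \<bullet> r + s * (z \<bullet> z) - s * (z \<bullet> w)" by (simp only: f1 f2)
      finally show ?thesis using A1 by simp
    qed
    have t7: "y \<bullet> (\<Psi> *v y) = g2 * (s * s * (w \<bullet> w) - 2 * s * (\<beta> \<bullet> w) + \<beta> \<bullet> \<beta>)"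
    proof -
      have V: "(L' - L) *v y = s *\<^sub>R w - \<beta>" unfolding L'_def w_def r_def \<beta>_def
        by (simp add: matrix_vector_mult_diff_rdistrib matrix_vector_mul_assoc[symmetric] scaleR_matrix_vector_assoc[symmetric])
      have sq: "(s *\<^sub>R w - \<beta>) \<bullet> (s *\<^sub>R w - \<beta>) = s * s * (w \<bullet> w) - 2 * s * (\<beta> \<bullet> w) + \<beta> \<bullet> \<beta>"
        by (simp add: inner_diff_left inner_diff_right inner_commute[of w \<beta>] algebra_simps)
      have "y \<bullet> (\<Psi> *v y) = g2 * (((L' - L) *v y) \<bullet> ((L' - L) *v y))"
        unfolding \<Psi>_def by (simp add: simps0)
      also have "\<dots> = g2 * ((s *\<^sub>R w - \<beta>) \<bullet> (s *\<^sub>R w - \<beta>))" by (simp only: V)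
      also have "\<dots> = g2 * (s * s * (w \<bullet> w) - 2 * s * (\<beta> \<bullet> w) + \<beta> \<bullet> \<beta>)" by (simp only: sq)
      finally show ?thesis .
    qed
    have k1: "g2 * (s * s * (w \<bullet> w)) = s * (w \<bullet> w)"
    proof -
      have "g2 * (s * s * (w \<bullet> w)) = (s * g2) * (s * (w \<bullet> w))" by (simp add: algebra_simps)
      then show ?thesis using sg by simp
    qed
    have k2: "g2 * (2 * s * (\<beta> \<bullet> w)) = 2 * (\<beta> \<bullet> w)"
    proof -
      have "g2 * (2 * s * (\<beta> \<bullet> w)) = (s * g2) * (2 * (\<beta> \<bullet> w))" by (simp add: algebra_simps)
      then show ?thesis using sg by simp
    qed
    have pos: "0 \<le> s * ((z - w) \<bullet> (z - w))" using spos by simp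
    have pos2: "s * ((z - w) \<bullet> (z - w)) = s * (z \<bullet> z) - 2 * (s * (z \<bullet> w)) + s * (w \<bullet> w)"
      by (simp add: inner_diff_left inner_diff_right inner_commute algebra_simps)
    have t8: "y \<bullet> (\<Psi> *v y) = s * (w \<bullet> w) - 2 * (\<beta> \<bullet> w) + g2 * (\<beta> \<bullet> \<beta>)"
    proof -
      have "g2 * (s * s * (w \<bullet> w) - 2 * s * (\<beta> \<bullet> w) + \<beta> \<bullet> \<beta>) = g2 * (s * s * (w \<bullet> w)) - g2 * (2 * s * (\<beta> \<bullet> w)) + g2 * (\<beta> \<bullet> \<beta>)"
        by (simp only: distrib_left right_diff_distrib)
      then show ?thesis using t7 k1 k2 by linarith
    qed
    have T1: "(Acl *v y) \<bullet> (\<Delta> *v y) + y \<bullet> (\<Delta> *v (Acl *v y)) + y \<bullet> (\<Psi> *v y) = s * ((z - w) \<bullet> (z - w))"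
      using t6 t8 H1 H2 pos2 by (smt (verit))
    show ?thesis using T1 pos by linarith
  qed
  define E where "E = (\<lambda>t. mexp (t *\<^sub>R Acl))"
  define f where "f = (\<lambda>t. mexp (t *\<^sub>R Acl) ** mexp (t *\<^sub>R transpose Acl))"
  define g where "g = (\<lambda>t. \<Sum>k\<in>UNIV. (E t *v axis k 1) \<bullet> (E t *v axis k 1))"
  define \<Phi> where "\<Phi> = (\<lambda>t. \<Sum>k\<in>UNIV. (E t *v axis k 1) \<bullet> (\<Delta> *v (E t *v axis k 1)))"
  define \<Phi>' where "\<Phi>' = (\<lambda>t. \<Sum>k\<in>UNIV. (Acl *v (E t *v axis k 1)) \<bullet> (\<Delta> *v (E t *v axis k 1))
       + (E t *v axis k 1) \<bullet> (\<Delta> *v (Acl *v (E t *v axis k 1))))"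
  define n where "n = real CARD('n)"
  have fE: "f t = E t ** transpose (E t)" for t
    unfolding f_def E_def by (simp add: transpose_scaleR[symmetric] mexp_transpose)
  have trf: "trace (f t) = g t" for t
  proof -
    have "trace (f t) = (\<Sum>i\<in>UNIV. \<Sum>k\<in>UNIV. E t $ i $ k * E t $ i $ k)"
      by (simp add: fE trace_def matrix_matrix_mult_def transpose_def)
    also have "\<dots> = (\<Sum>k\<in>UNIV. \<Sum>i\<in>UNIV. E t $ i $ k * E t $ i $ k)" by (rule sum.swap)
    also have "\<dots> = g t" unfolding g_def by (simp add: inner_vec_def col_entry)
    finally show ?thesis .
  qed
  have g_nonneg: "0 \<le> g t" for t unfolding g_def by (intro sum_nonneg) simp
  obtain C \<epsilon> where epos: "0 < \<epsilon>"
    and dec: "\<And>x t. 0 \<le> t \<Longrightarrow> norm (mexp (t *\<^sub>R Acl) *v x) ^ 2 \<le> C * norm x ^ 2 * exp (- \<epsilon> * t)"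
    using hurwitz_decay[OF Acl_hw] by blast
  have gbound: "g t \<le> n * C * exp (- \<epsilon> * t)" if t: "0 \<le> t" for t
  proof -
    have "g t \<le> (\<Sum>k\<in>(UNIV::'n set). C * exp (- \<epsilon> * t))"
      unfolding g_def
    proof (intro sum_mono)
      fix k :: 'n
      have "(E t *v axis k 1) \<bullet> (E t *v axis k 1) = norm (E t *v axis k 1) ^ 2" by (simp add: power2_norm_eq_inner)
      also have "\<dots> \<le> C * norm (axis k (1::real)) ^ 2 * exp (- \<epsilon> * t)" unfolding E_def by (rule dec[OF t])
      finally show "(E t *v axis k 1) \<bullet> (E t *v axis k 1) \<le> C * exp (- \<epsilon> * t)" by simp
    qed
    then show ?thesis unfolding n_def by simp
  qed
  have contE: "continuous_on UNIV E" unfolding E_def by (rule mexp_continuous)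
  have contf: "continuous_on UNIV f"
  proof -
    have "continuous_on UNIV (\<lambda>t. transpose (E t))"
      by (rule bounded_linear.continuous_on[OF linear_transpose[unfolded linear_conv_bounded_linear] contE])
    then have "continuous_on UNIV (\<lambda>t. E t ** transpose (E t))"
      by (rule bounded_bilinear.continuous_on[OF bl_mm contE])
    then show ?thesis using fE by presburger
  qed
  have contg: "continuous_on UNIV g"
  proof -
    have eq: "g = (\<lambda>t. trace (f t))" by (rule ext) (simp add: trf)
    show ?thesis unfolding eq by (rule bounded_linear.continuous_on[OF bl_trace contf])
  qed
  have fbound: "norm (f t) \<le> n * n * (n * C * exp (- \<epsilon> * t))" if t: "0 \<le> t" for t
  proof -
    have col: "\<bar>E t $ i $ k\<bar> \<le> norm (E t *v axis k 1)" for i k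
      using component_le_norm_cart[of "E t *v axis k 1" i] by (simp add: col_entry)
    have ent: "\<bar>f t $ i $ j\<bar> \<le> g t" for i j
    proof -
      have "\<bar>f t $ i $ j\<bar> = \<bar>\<Sum>k\<in>UNIV. E t $ i $ k * E t $ j $ k\<bar>"
        by (simp add: fE matrix_matrix_mult_def transpose_def)
      also have "\<dots> \<le> (\<Sum>k\<in>UNIV. \<bar>E t $ i $ k\<bar> * \<bar>E t $ j $ k\<bar>)"
        by (rule order_trans[OF sum_abs]) (simp add: abs_mult)
      also have "\<dots> \<le> (\<Sum>k\<in>UNIV. norm (E t *v axis k 1) * norm (E t *v axis k 1))"
        by (intro sum_mono mult_mono col) auto
      also have "\<dots> = g t" unfolding g_def by (simp add: power2_norm_eq_inner[symmetric] power2_eq_square)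
      finally show ?thesis .
    qed
    have "norm (f t) \<le> (\<Sum>i\<in>UNIV. \<Sum>j\<in>UNIV. \<bar>f t $ i $ j\<bar>)" by (rule norm_mat_le_sum)
    also have "\<dots> \<le> (\<Sum>i\<in>(UNIV::'n set). \<Sum>j\<in>(UNIV::'n set). g t)" by (intro sum_mono ent)
    also have "\<dots> = n * n * g t" unfolding n_def by simp
    also have "\<dots> \<le> n * n * (n * C * exp (- \<epsilon> * t))"
      using gbound[OF t] unfolding n_def by (intro mult_left_mono) auto
    finally show ?thesis .
  qed
  have fint: "f integrable_on {0..}"
  proof (rule measurable_bounded_by_integrable_imp_integrable)
    show "f \<in> borel_measurable (lebesgue_on {0..})"
      by (rule continuous_imp_measurable_on_sets_lebesgue[OF continuous_on_subset[OF contf]]) auto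
    show "(\<lambda>t. n * n * (n * C * exp (- \<epsilon> * t))) integrable_on {0..}"
      using integrable_on_cmult_left[OF integrable_on_cmult_left[OF integrable_on_exp_minus_to_infinity[OF epos, of 0], of "n * C"], of "n * n"]
      by simp
    show "norm (f t) \<le> n * n * (n * C * exp (- \<epsilon> * t))" if "t \<in> {0..}" for t using fbound that by simp
  qed auto
  have gint: "g integrable_on {0..}"
    using integrable_linear[OF fint bl_trace] trf by (simp add: o_def)
  have trint: "trace (integral {0..} f) = integral {0..} g"
    using integral_linear[OF fint bl_trace] trf by (simp add: o_def)
  have dPhi: "(\<Phi> has_real_derivative \<Phi>' t) (at t within S)" for t S
    unfolding \<Phi>_def \<Phi>'_def E_def
    by (rule DERIV_sum) (rule quad_deriv)
  have Phi'_lower: "- \<Phi>' t \<le> spec_norm \<Psi> * g t" for t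
  proof -
    have "- \<Phi>' t = (\<Sum>k\<in>UNIV. - ((Acl *v (E t *v axis k 1)) \<bullet> (\<Delta> *v (E t *v axis k 1))
       + (E t *v axis k 1) \<bullet> (\<Delta> *v (Acl *v (E t *v axis k 1)))))"
      unfolding \<Phi>'_def by (rule sum_negf[symmetric])
    also have "\<dots> \<le> (\<Sum>k\<in>UNIV. spec_norm \<Psi> * ((E t *v axis k 1) \<bullet> (E t *v axis k 1)))"
    proof (rule sum_mono)
      fix k :: 'n
      show "- ((Acl *v (E t *v axis k 1)) \<bullet> (\<Delta> *v (E t *v axis k 1))
       + (E t *v axis k 1) \<bullet> (\<Delta> *v (Acl *v (E t *v axis k 1))))
         \<le> spec_norm \<Psi> * ((E t *v axis k 1) \<bullet> (E t *v axis k 1))"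
        using lyap[of "E t *v axis k 1"] psi_bound[of "E t *v axis k 1"] by linarith
    qed
    also have "\<dots> = spec_norm \<Psi> * g t" unfolding g_def by (simp add: sum_distrib_left)
    finally show ?thesis .
  qed
  have psi0: "0 \<le> spec_norm \<Psi>" unfolding spec_norm_def by (rule onorm_mat_nonneg)
  have Phi0: "\<Phi> 0 = trace \<Delta>"
    unfolding \<Phi>_def E_def trace_def by (simp add: mexp_zero inner_axis' col_entry)
  have PhiT: "\<Phi> T \<le> onorm (\<lambda>v. \<Delta> *v v) * g T" for T
    unfolding \<Phi>_def g_def sum_distrib_left by (intro sum_mono quad_upper)
  have step: "trace \<Delta> \<le> onorm (\<lambda>v. \<Delta> *v v) * (n * C * exp (- \<epsilon> * T)) + spec_norm \<Psi> * integral {0..} g"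
    if T: "0 \<le> T" for T
  proof -
    have ftc: "(\<Phi>' has_integral (\<Phi> T - \<Phi> 0)) {0..T}"
      by (rule fundamental_theorem_of_calculus[OF T])
        (simp add: dPhi has_real_derivative_iff_has_vector_derivative[symmetric])
    have gI: "(g has_integral integral {0..T} g) {0..T}"
      by (rule integrable_integral[OF integrable_continuous_interval[OF continuous_on_subset[OF contg]]]) auto
    have "- (\<Phi> T - \<Phi> 0) \<le> spec_norm \<Psi> * integral {0..T} g"
      by (rule has_integral_le[OF has_integral_neg[OF ftc] has_integral_mult_right[OF gI]]) (rule Phi'_lower)
    moreover have "integral {0..T} g \<le> integral {0..} g"
      by (rule integral_subset_le) (use gint g_nonneg gI in auto)
    then have "spec_norm \<Psi> * integral {0..T} g \<le> spec_norm \<Psi> * integral {0..} g"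
      using psi0 by (rule mult_left_mono)
    moreover have "onorm (\<lambda>v. \<Delta> *v v) * g T \<le> onorm (\<lambda>v. \<Delta> *v v) * (n * C * exp (- \<epsilon> * T))"
      using gbound[OF T] onorm_mat_nonneg[of \<Delta>] by (rule mult_left_mono)
    ultimately show ?thesis using Phi0 PhiT[of T] by linarith
  qed
  have lim0: "((\<lambda>T. onorm (\<lambda>v. \<Delta> *v v) * (n * C * exp (- \<epsilon> * T)) + spec_norm \<Psi> * integral {0..} g) \<longlongrightarrow>
        onorm (\<lambda>v. \<Delta> *v v) * (n * C * 0) + spec_norm \<Psi> * integral {0..} g) at_top"
    by (intro tendsto_intros exp_neg_tendsto epos)
  then have lim: "((\<lambda>T. onorm (\<lambda>v. \<Delta> *v v) * (n * C * exp (- \<epsilon> * T)) + spec_norm \<Psi> * integral {0..} g) \<longlongrightarrow>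
        spec_norm \<Psi> * integral {0..} g) at_top" by simp
  have ev: "\<forall>\<^sub>F T in at_top. trace \<Delta> \<le> onorm (\<lambda>v. \<Delta> *v v) * (n * C * exp (- \<epsilon> * T)) + spec_norm \<Psi> * integral {0..} g"
    using eventually_ge_at_top[of "0::real"] by eventually_elim (rule step)
  have main: "trace \<Delta> \<le> spec_norm \<Psi> * integral {0..} g"
    by (rule tendsto_le[OF trivial_limit_at_top_linorder lim tendsto_const ev])
  have main2: "trace \<Delta> \<le> spec_norm \<Psi> * trace (integral {0..} f)"
    using main trint by simp
  show ?thesis
    using main2 unfolding Let_def \<Delta>_def \<Psi>_def f_def Acl_def Lstar_def L'_def s_def g2_def .
qed


end
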